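(* Assume the capacities satisfy (C1) and (C3). Let $G_N$ be the Poissonian random graph and $G_N'$ a random graph satisfying (A1) and (A2), both with capacities $\{\lambda_i\}$, coupled as described below, and let $\mathcal A_N=\big\{\sum_{i=1}^N K_i\mathbf 1\{\lambda_i>c_N\}=0\big\}$ with $c_N=N^{\xi}$. For each $\xi>0$ there exists a constant $\theta>0$ such that $\mathbb P(\mathcal A_N^c)=O(N^{-\theta})$.
   Context: Capacities $\lambda_1,\dots,\lambda_N>0$ deterministic, $l_N=\sum_i\lambda_i$, $\mu_N=\frac1N\sum_i\lambda_i$, $\nu_N=\sum_i\lambda_i^2/\sum_i\lambda_i$. (C1): there are $\mu\in(0,\infty)$, $\nu\in(1,\infty)$, $\alpha_1>0$ with $|\mu_N-\mu|=O(N^{-\alpha_1})$, $|\nu_N-\nu|=O(N^{-\alpha_1})$. (C3): there is $\tau>3$ such that for every $\varepsilon>0$ (with $\gamma:=\frac1{\tau-1}+\varepsilon<\frac12$), $\limsup_N\frac1N\sum_i\lambda_i^{\tau-1-\varepsilon}<\infty$ and $\max_i\lambda_i\le N^\gamma$. Poissonian random graph: the numbers of edges between distinct nodes $i,j$ are independent Poisson variables with mean $\lambda_i\lambda_j/l_N$; its connection indicator $X_{ij}=\mathbf 1\{\text{at least one edge}\}$ has $p_{ij}=1-e^{-\lambda_i\lambda_j/l_N}$. $G_N'$: edge indicators $X'_{ij}$ independent (A1) with $p'_{ij}=\mathbb P(X'_{ij}=1)=h(\lambda_i\lambda_j/l_N)$, $h:[0,\infty)\to[0,1]$, $h(x)-x=O(x^2)$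 as $x\downarrow0$ (A2). Coupling: independently over pairs $i<j$, with $\underline p_{ij}=\min\{p_{ij},p'_{ij}\}$, $\overline p_{ij}=\max\{p_{ij},p'_{ij}\}$, let $(\hat X_{ij},\hat X'_{ij},K_{ij})$ take values $(1,1,0),(1,0,1),(0,1,1),(0,0,0)$ with probabilities $\underline p_{ij}$, $p_{ij}-\underline p_{ij}$, $\overline p_{ij}-p_{ij}$, $1-\overline p_{ij}$ respectively; $\hat X_{ij}$ and $\hat X'_{ij}$ are used as the connection indicators of $G_N$ and $G_N'$, so $K_{ij}=\mathbf 1\{\hat X_{ij}\ne\hat X'_{ij}\}$ (a mismatch), $K_{ji}=K_{ij}$, and $K_i=\sum_{j\ne i}K_{ij}$. *)

theory Defs
  imports "HOL-Probability.Probability" "HOL-Library.Landau_Symbols"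
begin

text \<open>Nodes are 0..N-1; capacities form a triangular array lam N i (i < N).\<close>

definition l_N :: "(nat \<Rightarrow> nat \<Rightarrow> real) \<Rightarrow> nat \<Rightarrow> real" where
  "l_N lam N = (\<Sum>i<N. lam N i)"

definition mu_N :: "(nat \<Rightarrow> nat \<Rightarrow> real) \<Rightarrow> nat \<Rightarrow> real" where
  "mu_N lam N = l_N lam N / real N"

definition nu_N :: "(nat \<Rightarrow> nat \<Rightarrow> real) \<Rightarrow> nat \<Rightarrow> real" where
  "nu_N lam N = (\<Sum>i<N. (lam N i)^2) / l_N lam N"

definition cond_C1 :: "(nat \<Rightarrow> nat \<Rightarrow> real) \<Rightarrow> bool" where
  "cond_C1 lam \<longleftrightarrow> (\<exists>mu nu a1. 0 < mu \<and> 1 < nu \<and> 0 < a1 \<and>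
      (\<lambda>N. \<bar>mu_N lam N - mu\<bar>) \<in> O(\<lambda>N. real N powr (-a1)) \<and>
      (\<lambda>N. \<bar>nu_N lam N - nu\<bar>) \<in> O(\<lambda>N. real N powr (-a1)))"

definition cond_C3 :: "(nat \<Rightarrow> nat \<Rightarrow> real) \<Rightarrow> bool" where
  "cond_C3 lam \<longleftrightarrow> (\<exists>tau. 3 < tau \<and> (\<forall>eps>0. 1/(tau-1) + eps < 1/2 \<longrightarrow>
      (limsup (\<lambda>N. ereal ((1/real N) * (\<Sum>i<N. lam N i powr (tau - 1 - eps)))) < \<infinity>) \<and>
      (\<forall>N\<ge>1. \<forall>i<N. lam N i \<le> real N powr (1/(tau-1) + eps))))"

definition p_pois :: "(nat \<Rightarrow> nat \<Rightarrow> real) \<Rightarrow> nat \<Rightarrow> nat \<Rightarrow> nat \<Rightarrow> real" where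
  "p_pois lam N i j = 1 - exp (- (lam N i * lam N j / l_N lam N))"

definition p_alt :: "(real \<Rightarrow> real) \<Rightarrow> (nat \<Rightarrow> nat \<Rightarrow> real) \<Rightarrow> nat \<Rightarrow> nat \<Rightarrow> nat \<Rightarrow> real" where
  "p_alt h lam N i j = h (lam N i * lam N j / l_N lam N)"

text \<open>Coupling of one pair: outcome (X, X', K) with the prescribed probabilities.\<close>
definition coupling_pmf :: "real \<Rightarrow> real \<Rightarrow> (bool \<times> bool \<times> bool) pmf" where
  "coupling_pmf p q = embed_pmf (\<lambda>w.
     if w = (True, True, False) then min p q
     else if w = (True, False, True) then p - min p q
     else if w = (False, True, True) then max p q - p
     else if w = (False, False, False) then 1 - max p q
     else 0)"

definition pairs :: "nat \<Rightarrow> (nat \<times> nat) set" where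
  "pairs N = {(i, j). i < j \<and> j < N}"

definition coupled_graphs ::
  "(real \<Rightarrow> real) \<Rightarrow> (nat \<Rightarrow> nat \<Rightarrow> real) \<Rightarrow> nat \<Rightarrow> (nat \<times> nat \<Rightarrow> bool \<times> bool \<times> bool) pmf" where
  "coupled_graphs h lam N = Pi_pmf (pairs N) (False, False, False)
      (\<lambda>(i, j). coupling_pmf (p_pois lam N i j) (p_alt h lam N i j))"

definition K_pair :: "(nat \<times> nat \<Rightarrow> bool \<times> bool \<times> bool) \<Rightarrow> nat \<Rightarrow> nat \<Rightarrow> nat" where
  "K_pair w i j = (if snd (snd (w (min i j, max i j))) then 1 else 0)"

definition K_node :: "nat \<Rightarrow> (nat \<times> nat \<Rightarrow> bool \<times> bool \<times> bool) \<Rightarrow> nat \<Rightarrow> nat" where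
  "K_node N w i = (\<Sum>j\<in>{..<N} - {i}. K_pair w i j)"

definition event_A :: "nat \<Rightarrow> real \<Rightarrow> (real \<Rightarrow> real) \<Rightarrow> (nat \<Rightarrow> nat \<Rightarrow> real)
    \<Rightarrow> (nat \<times> nat \<Rightarrow> bool \<times> bool \<times> bool) set" where
  "event_A N c h lam = {w. (\<Sum>i<N. K_node N w i * (if lam N i > c then 1 else 0)) = (0::nat)}"

end

theory Submission
  imports Defs
begin

lemma coupling_pmf_K:
  fixes p q :: real
  assumes "0 \<le> p" "p \<le> 1" "0 \<le> q" "q \<le> 1"
  shows "measure_pmf.prob (coupling_pmf p q) {x. snd (snd x)} = \<bar>p - q\<bar>"
proof -
  define f :: "bool \<times> bool \<times> bool \<Rightarrow> real" where "f = (\<lambda>w.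
     if w = (True, True, False) then min p q
     else if w = (True, False, True) then p - min p q
     else if w = (False, True, True) then max p q - p
     else if w = (False, False, False) then 1 - max p q
     else 0)"
  have nn: "\<And>x. 0 \<le> f x" using assms unfolding f_def by auto
  have U: "(UNIV :: (bool \<times> bool \<times> bool) set) = {(a,b,c) | a b c. a \<in> {True,False} \<and> b \<in> {True,False} \<and> c \<in> {True,False}}"
    by auto
  have U2: "(UNIV :: (bool \<times> bool \<times> bool) set) = {(True,True,True),(True,True,False),(True,False,True),(True,False,False),
     (False,True,True),(False,True,False),(False,False,True),(False,False,False)}"
    by (auto; metis (full_types))
  have "(\<integral>\<^sup>+x. ennreal (f x) \<partial>count_space UNIV) = (\<Sum>x\<in>UNIV. ennreal (f x))"
    by (simp add: nn_integral_count_space_finite)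
  also have "\<dots> = ennreal (\<Sum>x\<in>UNIV. f x)"
    using nn by (simp add: sum_ennreal)
  also have "(\<Sum>x\<in>UNIV. f x) = 1"
    unfolding U2 by (simp add: f_def)
  finally have prob: "(\<integral>\<^sup>+x. ennreal (f x) \<partial>count_space UNIV) = 1" by simp
  note pe = pmf_embed_pmf[OF nn prob]
  have cp: "coupling_pmf p q = embed_pmf f" unfolding coupling_pmf_def f_def by simp
  have S: "{x. snd (snd x)} = {(True,True,True),(True,False,True),(False,True,True),(False,False,True)}"
    by (auto; metis (full_types))
  show ?thesis
    unfolding cp S by (simp add: measure_measure_pmf_finite pe, simp add: f_def)
qed

lemma prob_union_bound:
  fixes P Q :: "nat \<Rightarrow> nat \<Rightarrow> real"
  assumes pq: "\<And>i j. i < j \<Longrightarrow> j < N \<Longrightarrow> 0 \<le> P i j \<and> P i j \<le> 1 \<and> 0 \<le> Q i j \<and> Q i j \<le> 1"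
  shows "measure_pmf.prob (Pi_pmf (pairs N) (False, False, False)
      (\<lambda>(i, j). coupling_pmf (P i j) (Q i j))) (- event_A N c h lam)
     \<le> (\<Sum>(i,j)\<in>Sigma {i. i < N \<and> c < lam N i} (\<lambda>i. {..<N}-{i}).
            \<bar>P (min i j) (max i j) - Q (min i j) (max i j)\<bar>)"
proof -
  let ?G = "Pi_pmf (pairs N) (False, False, False) (\<lambda>(i, j). coupling_pmf (P i j) (Q i j))"
  let ?S = "Sigma {i. i < N \<and> c < lam N i} (\<lambda>i. {..<N}-{i})"
  let ?E = "\<lambda>(i::nat,j::nat). {w. snd (snd (w (min i j, max i j)))}"
  have fin: "finite ?S" by (rule finite_SigmaI) auto
  have sub: "- event_A N c h lam \<subseteq> (\<Union>x\<in>?S. ?E x)"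
  proof
    fix w assume "w \<in> - event_A N c h lam"
    then have "(\<Sum>i<N. K_node N w i * (if lam N i > c then 1 else 0)) \<noteq> (0::nat)"
      unfolding event_A_def by auto
    then obtain i where i: "i < N" "K_node N w i * (if lam N i > c then 1 else 0) \<noteq> 0"
      using sum.neutral by (metis (no_types, lifting) lessThan_iff)
    then have ci: "c < lam N i" and "K_node N w i \<noteq> 0" by (auto split: if_splits)
    then obtain j where j: "j \<in> {..<N}-{i}" "K_pair w i j \<noteq> 0"
      unfolding K_node_def using sum.neutral by (metis (no_types, lifting))
    then have "snd (snd (w (min i j, max i j)))" unfolding K_pair_def by (auto split: if_splits)
    then show "w \<in> (\<Union>x\<in>?S. ?E x)" using i ci j by auto
  qed
  have "measure_pmf.prob ?G (- event_A N c h lam) \<le> measure_pmf.prob ?G (\<Union>x\<in>?S. ?E x)"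
    by (rule measure_pmf.finite_measure_mono[OF sub]) simp
  also have "\<dots> \<le> (\<Sum>x\<in>?S. measure_pmf.prob ?G (?E x))"
    by (rule measure_pmf.finite_measure_subadditive_finite[OF fin]) simp
  also have "\<dots> = (\<Sum>(i,j)\<in>?S. \<bar>P (min i j) (max i j) - Q (min i j) (max i j)\<bar>)"
  proof (rule sum.cong[OF refl])
    fix x assume "x \<in> ?S"
    then obtain i j where x: "x = (i,j)" "i < N" "j < N" "i \<noteq> j" by auto
    let ?a = "min i j" let ?b = "max i j"
    have ab: "?a < ?b" "?b < N" using x by auto
    have inp: "(?a, ?b) \<in> pairs N" using ab unfolding pairs_def by auto
    have finp: "finite (pairs N)" unfolding pairs_def
      by (rule finite_subset[of _ "{..<N} \<times> {..<N}"]) auto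
    have "measure_pmf.prob ?G (?E x) = measure_pmf.prob (map_pmf (\<lambda>f. f (?a, ?b)) ?G) {y. snd (snd y)}"
      by (simp add: x)
    also have "map_pmf (\<lambda>f. f (?a, ?b)) ?G = coupling_pmf (P ?a ?b) (Q ?a ?b)"
      by (subst Pi_pmf_component[OF finp]) (use inp in simp)
    also have "measure_pmf.prob \<dots> {y. snd (snd y)} = \<bar>P ?a ?b - Q ?a ?b\<bar>"
      using pq[OF ab] by (intro coupling_pmf_K) auto
    finally show "measure_pmf.prob ?G (?E x) = (case x of (i,j) \<Rightarrow> \<bar>P (min i j) (max i j) - Q (min i j) (max i j)\<bar>)"
      using x by simp
  qed
  finally show ?thesis .
qed

lemma ev_small:
  fixes K a e :: real
  assumes "a > 0" "e > 0"
  shows "eventually (\<lambda>N::nat. K * real N powr (-a) < e) sequentially"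
proof -
  have "((\<lambda>N::nat. real N powr (-a)) \<longlongrightarrow> 0) sequentially"
    by (rule tendsto_neg_powr) (use assms filterlim_real_sequentially in auto)
  then have "((\<lambda>N::nat. K * real N powr (-a)) \<longlongrightarrow> K * 0) sequentially"
    by (intro tendsto_mult tendsto_const)
  then show ?thesis using assms by (auto dest: order_tendstoD(2))
qed

lemma ev_close:
  fixes f :: "nat \<Rightarrow> real"
  assumes "(\<lambda>N. \<bar>f N - m\<bar>) \<in> O(\<lambda>N. real N powr (-a))" "a > 0" "e > 0"
  shows "eventually (\<lambda>N. \<bar>f N - m\<bar> < e) sequentially"
proof -
  from assms(1) obtain c where c: "c > 0"
    "eventually (\<lambda>N. norm \<bar>f N - m\<bar> \<le> c * norm (real N powr (-a))) sequentially"
    by (elim landau_o.bigE) auto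
  from c(2) ev_small[OF assms(2,3), of c]
  show ?thesis by eventually_elim auto
qed

lemma exp_quad:
  fixes x :: real assumes "0 \<le> x"
  shows "\<bar>(1 - exp (- x)) - x\<bar> \<le> x^2"
proof -
  have e1: "1 - x \<le> exp (-x)" using exp_ge_add_one_self[of "-x"] by simp
  have "1 + x \<le> exp x" using exp_ge_add_one_self[of x] by simp
  then have "exp (-x) \<le> 1 / (1 + x)" using assms
    by (simp add: exp_minus field_simps)
  also have "\<dots> \<le> 1 - x + x^2"
    using assms by (simp add: field_simps power2_eq_square)
  finally show ?thesis using e1 assms by (simp add: abs_if)
qed

lemma limsup_bound:
  fixes X :: "nat \<Rightarrow> real"
  assumes "limsup (\<lambda>N. ereal (X N)) < \<infinity>"
  shows "\<exists>B. eventually (\<lambda>N. X N < B) sequentially"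
proof -
  have "\<exists>B. limsup (\<lambda>N. ereal (X N)) < ereal B"
  proof (cases "limsup (\<lambda>N. ereal (X N))")
    case (real r) then show ?thesis by (intro exI[of _ "r+1"]) simp
  qed (use assms in auto)
  then obtain B where B: "limsup (\<lambda>N. ereal (X N)) < ereal B" by blast
  from Limsup_lessD[OF B] show ?thesis by auto
qed


lemma main_bound:
  fixes lam :: "nat \<Rightarrow> nat \<Rightarrow> real" and h :: "real \<Rightarrow> real"
  assumes pos: "\<And>i. i < N \<Longrightarrow> 0 < lam N i"
    and N1: "N \<ge> 1" and mu: "mu > 0" and muN: "mu_N lam N \<ge> mu / 2"
    and nuN: "nu_N lam N \<le> nu + 1"
    and BB: "(1/real N) * (\<Sum>i<N. lam N i powr s) < B"
    and s2: "s > 2" and xi: "xi > 0"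
    and hb: "\<And>y. 0 < y \<Longrightarrow> y < b \<Longrightarrow> \<bar>h y - y\<bar> \<le> Ch * y^2"
    and small: "\<And>i j. i < N \<Longrightarrow> j < N \<Longrightarrow> lam N i * lam N j / l_N lam N < b"
    and h_range: "\<And>x. 0 \<le> x \<Longrightarrow> 0 \<le> h x \<and> h x \<le> 1"
    and Ch_nonneg: "Ch \<ge> 0"
  shows "measure_pmf.prob (coupled_graphs h lam N) (- event_A N (real N powr xi) h lam)
          \<le> (1 + Ch) * (nu + 1) * (2 / mu) * B * real N powr (xi * (2 - s))"
proof -
  define l where "l = l_N lam N"
  define c where "c = real N powr xi"
  define I where "I = {i. i < N \<and> c < lam N i}"
  define S where "S = Sigma I (\<lambda>i. {..<N}-{i})"
  have Npos: "real N > 0" using N1 by simp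
  have ll: "l = mu_N lam N * real N" unfolding l_def mu_N_def using Npos by simp
  have lpos: "l \<ge> mu / 2 * real N" using muN Npos ll by (simp add: mult_right_mono)
  have lpos': "l > 0" using lpos mu Npos by (metis less_le_trans half_gt_zero mult_pos_pos)
  have cpos: "c > 0" unfolding c_def using Npos by simp
  have xpos: "0 < lam N i * lam N j / l" if "i < N" "j < N" for i j
    using pos that lpos' by simp
  have pq: "0 \<le> p_pois lam N i j \<and> p_pois lam N i j \<le> 1 \<and> 0 \<le> p_alt h lam N i j \<and> p_alt h lam N i j \<le> 1"
    if "i < j" "j < N" for i j
  proof -
    have x: "0 < lam N i * lam N j / l" using xpos that by simp
    then show ?thesis unfolding p_pois_def p_alt_def l_def[symmetric]
      using h_range[of "lam N i * lam N j / l"] by auto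
  qed
  have hterm: "\<bar>p_pois lam N i j - p_alt h lam N i j\<bar> \<le> (1 + Ch) * (lam N i * lam N j / l)^2"
    if "i < N" "j < N" for i j
  proof -
    define x where "x = lam N i * lam N j / l"
    have x0: "0 < x" "x < b" using xpos[OF that] small[OF that] unfolding x_def l_def by auto
    have "\<bar>p_pois lam N i j - p_alt h lam N i j\<bar> = \<bar>((1 - exp (-x)) - x) - (h x - x)\<bar>"
      unfolding p_pois_def p_alt_def x_def l_def by simp
    also have "\<dots> \<le> \<bar>(1 - exp (-x)) - x\<bar> + \<bar>h x - x\<bar>" by (rule abs_triangle_ineq4)
    also have "\<dots> \<le> x^2 + Ch * x^2" using exp_quad[of x] hb[OF x0] x0 by simp
    finally show ?thesis unfolding x_def by (simp add: algebra_simps)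
  qed
  have "measure_pmf.prob (coupled_graphs h lam N) (- event_A N c h lam)
     \<le> (\<Sum>(i,j)\<in>S. \<bar>p_pois lam N (min i j) (max i j) - p_alt h lam N (min i j) (max i j)\<bar>)"
    unfolding coupled_graphs_def S_def I_def by (rule prob_union_bound) (use pq in auto)
  also have "\<dots> \<le> (\<Sum>(i,j)\<in>S. (1 + Ch) / l^2 * ((lam N i)^2 * (lam N j)^2))"
  proof (rule sum_mono)
    fix x assume "x \<in> S"
    then obtain i j where x: "x = (i,j)" "i < N" "j < N" by (auto simp: S_def I_def)
    have "lam N (min i j) * lam N (max i j) = lam N i * lam N j"
      by (cases "i \<le> j") (auto simp: min_def max_def)
    then have "\<bar>p_pois lam N (min i j) (max i j) - p_alt h lam N (min i j) (max i j)\<bar>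
        \<le> (1 + Ch) * (lam N i * lam N j / l)^2"
      using hterm[of "min i j" "max i j"] x by simp
    also have "\<dots> = (1 + Ch) / l^2 * ((lam N i)^2 * (lam N j)^2)"
      by (simp add: power_divide power_mult_distrib)
    finally show "(case x of (i,j) \<Rightarrow> \<bar>p_pois lam N (min i j) (max i j) - p_alt h lam N (min i j) (max i j)\<bar>)
        \<le> (case x of (i,j) \<Rightarrow> (1 + Ch) / l^2 * ((lam N i)^2 * (lam N j)^2))" using x by simp
  qed
  also have "\<dots> = (1 + Ch) / l^2 * (\<Sum>i\<in>I. \<Sum>j\<in>{..<N}-{i}. (lam N i)^2 * (lam N j)^2)"
  proof -
    have finI: "finite I" unfolding I_def by auto
    have "(\<Sum>(i,j)\<in>S. (1 + Ch) / l^2 * ((lam N i)^2 * (lam N j)^2))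
       = (\<Sum>i\<in>I. \<Sum>j\<in>{..<N}-{i}. (1 + Ch) / l^2 * ((lam N i)^2 * (lam N j)^2))"
      unfolding S_def by (rule sum.Sigma[symmetric, OF finI]) auto
    then show ?thesis by (simp add: sum_distrib_left)
  qed
  also have "\<dots> \<le> (1 + Ch) / l^2 * (\<Sum>i\<in>I. \<Sum>j<N. (lam N i)^2 * (lam N j)^2)"
    by (intro mult_left_mono sum_mono sum_mono2) (use Ch_nonneg in auto)
  also have "\<dots> = (1 + Ch) / l^2 * ((\<Sum>i\<in>I. (lam N i)^2) * (\<Sum>j<N. (lam N j)^2))"
    by (simp add: sum_product)
  also have "(\<Sum>j<N. (lam N j)^2) = nu_N lam N * l"
    unfolding nu_N_def l_def[symmetric] using lpos' by simp
  also have "(1 + Ch) / l^2 * ((\<Sum>i\<in>I. (lam N i)^2) * (nu_N lam N * l))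
      = ((1 + Ch) * (nu_N lam N / l)) * (\<Sum>i\<in>I. (lam N i)^2)"
    using lpos' by (simp add: power2_eq_square field_simps)
  also have "\<dots> \<le> ((1 + Ch) * ((nu + 1) / (mu / 2 * real N))) * (\<Sum>i\<in>I. (lam N i)^2)"
  proof (intro mult_right_mono mult_left_mono)
    have nun: "nu_N lam N \<ge> 0" unfolding nu_N_def l_def[symmetric] using lpos'
      by (intro divide_nonneg_pos sum_nonneg) auto
    show "nu_N lam N / l \<le> (nu + 1) / (mu / 2 * real N)"
      by (rule frac_le) (use nun nuN lpos mu Npos in auto)
  qed (use Ch_nonneg in \<open>auto intro: sum_nonneg\<close>)
  finally have A: "measure_pmf.prob (coupled_graphs h lam N) (- event_A N c h lam)
     \<le> ((1 + Ch) * ((nu + 1) / (mu / 2 * real N))) * (\<Sum>i\<in>I. (lam N i)^2)" .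
  have "(\<Sum>i\<in>I. (lam N i)^2) \<le> (\<Sum>i\<in>I. c powr (2 - s) * lam N i powr s)"
  proof (rule sum_mono)
    fix i assume "i \<in> I"
    then have i: "c < lam N i" "0 < lam N i" using pos by (auto simp: I_def)
    have "(lam N i)^2 = lam N i powr (2 - s) * lam N i powr s"
      using i by (simp add: powr_add[symmetric] powr_numeral)
    also have "\<dots> \<le> c powr (2 - s) * lam N i powr s"
      by (intro mult_right_mono powr_mono2') (use i s2 cpos in auto)
    finally show "(lam N i)^2 \<le> c powr (2 - s) * lam N i powr s" .
  qed
  also have "\<dots> \<le> (\<Sum>i<N. c powr (2 - s) * lam N i powr s)"
    by (rule sum_mono2) (auto simp: I_def)
  also have "\<dots> = c powr (2 - s) * (\<Sum>i<N. lam N i powr s)"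
    by (simp add: sum_distrib_left)
  also have "\<dots> \<le> c powr (2 - s) * (real N * B)"
  proof (rule mult_left_mono)
    show "(\<Sum>i<N. lam N i powr s) \<le> real N * B"
      using BB Npos by (simp add: field_simps)
  qed simp
  finally have X: "(\<Sum>i\<in>I. (lam N i)^2) \<le> c powr (2 - s) * (real N * B)" .
  have K0: "(1 + Ch) * ((nu + 1) / (mu / 2 * real N)) \<ge> 0"
  proof -
    have "nu + 1 \<ge> 0" using nuN unfolding nu_N_def l_def[symmetric] using lpos'
      by (smt (verit) divide_nonneg_pos sum_nonneg zero_le_power2)
    then show ?thesis using Ch_nonneg mu Npos by simp
  qed
  have fin: "measure_pmf.prob (coupled_graphs h lam N) (- event_A N c h lam)
     \<le> (1 + Ch) * ((nu + 1) / (mu / 2 * real N)) * (c powr (2 - s) * (real N * B))"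
    using A mult_left_mono[OF X K0] by linarith
  have cp: "c powr (2 - s) = real N powr (xi * (2 - s))"
    unfolding c_def by (simp add: powr_powr)
  have "(1 + Ch) * ((nu + 1) / (mu / 2 * real N)) * (c powr (2 - s) * (real N * B))
      = (1 + Ch) * (nu + 1) * (2 / mu) * B * real N powr (xi * (2 - s))"
    unfolding cp using Npos mu by (simp add: field_simps)
  then show ?thesis using fin unfolding c_def by simp
qed

theorem lemma2p1:
  fixes lam :: "nat \<Rightarrow> nat \<Rightarrow> real" and h :: "real \<Rightarrow> real" and xi :: real
  assumes pos: "\<And>N i. i < N \<Longrightarrow> 0 < lam N i"
    and C1: "cond_C1 lam"
    and C3: "cond_C3 lam"
    and h_range: "\<And>x. 0 \<le> x \<Longrightarrow> 0 \<le> h x \<and> h x \<le> 1"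
    and A2: "(\<lambda>x. h x - x) \<in> O[at_right 0](\<lambda>x. x^2)"
    and xi: "0 < xi"
  shows "\<exists>theta>0. (\<lambda>N. measure_pmf.prob (coupled_graphs h lam N)
                          (- event_A N (real N powr xi) h lam))
                    \<in> O(\<lambda>N. real N powr (-theta))"
proof -
  obtain mu nu a1 where mu: "0 < mu" and a1: "0 < a1"
    and hmu: "(\<lambda>N. \<bar>mu_N lam N - mu\<bar>) \<in> O(\<lambda>N. real N powr (-a1))"
    and hnu: "(\<lambda>N. \<bar>nu_N lam N - nu\<bar>) \<in> O(\<lambda>N. real N powr (-a1))"
    using C1 unfolding cond_C1_def by blast
  obtain tau where tau: "3 < tau" and H: "\<And>eps. eps > 0 \<Longrightarrow> 1/(tau-1) + eps < 1/2 \<Longrightarrow>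
      (limsup (\<lambda>N. ereal ((1/real N) * (\<Sum>i<N. lam N i powr (tau - 1 - eps)))) < \<infinity>) \<and>
      (\<forall>N\<ge>1. \<forall>i<N. lam N i \<le> real N powr (1/(tau-1) + eps))"
    using C3 unfolding cond_C3_def by blast
  define eps where "eps = min ((1/2 - 1/(tau-1))/2) ((tau-3)/2)"
  have t1: "1/(tau-1) < 1/2" using tau by (simp add: field_simps)
  have eps0: "eps > 0" using t1 tau unfolding eps_def by simp
  have epsa: "eps \<le> (1/2 - 1/(tau-1))/2" and epsb: "eps \<le> (tau-3)/2" unfolding eps_def by (auto simp del: divide_le_eq_numeral1 le_divide_eq_numeral1 simp add: min_def)
  define gam where "gam = 1/(tau-1) + eps"
  have gam: "gam < 1/2"
  proof -
    define t where "t = 1/(tau-1)"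
    show ?thesis using t1 epsa unfolding gam_def t_def[symmetric] by (simp add: field_simps)
  qed
  have gam0: "gam > 0" unfolding gam_def by (rule add_pos_pos) (use tau eps0 in auto)
  define s where "s = tau - 1 - eps"
  have s2: "s > 2" using tau epsb unfolding s_def by (simp add: field_simps)
  from H[OF eps0 gam[unfolded gam_def]] have
    LS: "limsup (\<lambda>N. ereal ((1/real N) * (\<Sum>i<N. lam N i powr s))) < \<infinity>"
    and MX: "\<And>N i. N \<ge> 1 \<Longrightarrow> i < N \<Longrightarrow> lam N i \<le> real N powr gam"
    unfolding s_def gam_def by auto
  obtain B where EB: "eventually (\<lambda>N. (1/real N) * (\<Sum>i<N. lam N i powr s) < B) sequentially"
    using limsup_bound[OF LS] by blast
  obtain Ch where Ch: "Ch > 0" and EH: "eventually (\<lambda>x. norm (h x - x) \<le> Ch * norm (x^2)) (at_right 0)"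
    using A2 by (elim landau_o.bigE) auto
  obtain b where b: "b > 0" and hb0: "\<And>y. 0 < y \<Longrightarrow> y < b \<Longrightarrow> norm (h y - y) \<le> Ch * norm (y^2)"
    using EH unfolding eventually_at_right_field by auto
  have hb: "\<And>y. 0 < y \<Longrightarrow> y < b \<Longrightarrow> \<bar>h y - y\<bar> \<le> Ch * y^2"
    using hb0 by simp
  have E1: "eventually (\<lambda>N. \<bar>mu_N lam N - mu\<bar> < mu / 2) sequentially"
    by (rule ev_close[OF hmu a1]) (use mu in simp)
  have E2: "eventually (\<lambda>N. \<bar>nu_N lam N - nu\<bar> < 1) sequentially"
    by (rule ev_close[OF hnu a1]) simp
  have E4: "eventually (\<lambda>N::nat. (2 / mu) * real N powr (-(1 - 2 * gam)) < b) sequentially"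
    by (rule ev_small) (use gam b in auto)
  have E5: "eventually (\<lambda>N::nat. N \<ge> 1) sequentially"
    by (rule eventually_ge_at_top)
  define K where "K = (1 + Ch) * (nu + 1) * (2 / mu) * B"
  define theta where "theta = xi * (s - 2)"
  have theta: "theta > 0" using xi s2 unfolding theta_def by simp
  have "eventually (\<lambda>N. norm (measure_pmf.prob (coupled_graphs h lam N)
                          (- event_A N (real N powr xi) h lam)) \<le> K * norm (real N powr (-theta))) sequentially"
    using E1 E2 EB E4 E5
  proof eventually_elim
    case (elim N)
    have Npos: "real N > 0" using elim by simp
    have muN: "mu_N lam N \<ge> mu / 2" using elim by linarith
    have nuN: "nu_N lam N \<le> nu + 1" using elim by linarith
    have l: "l_N lam N = mu_N lam N * real N" unfolding mu_N_def using Npos by simp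
    have lpos: "l_N lam N \<ge> mu / 2 * real N" using muN Npos l by (simp add: mult_right_mono)
    have small: "lam N i * lam N j / l_N lam N < b" if "i < N" "j < N" for i j
    proof -
      have "lam N i * lam N j \<le> real N powr gam * real N powr gam"
        using MX[of N i] MX[of N j] pos[of i N] pos[of j N] that elim
        by (intro mult_mono) auto
      also have "\<dots> = real N powr (2 * gam)" by (simp add: powr_add[symmetric])
      finally have num: "lam N i * lam N j \<le> real N powr (2 * gam)" .
      have "lam N i * lam N j / l_N lam N \<le> real N powr (2 * gam) / (mu / 2 * real N)"
        using num lpos mu Npos pos[of i N] pos[of j N] that
        by (intro frac_le) auto
      also have "\<dots> = (2 / mu) * real N powr (-(1 - 2 * gam))"
        using Npos mu by (simp add: powr_diff powr_minus field_simps)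
      finally show ?thesis using elim by linarith
    qed
    have "measure_pmf.prob (coupled_graphs h lam N) (- event_A N (real N powr xi) h lam)
          \<le> (1 + Ch) * (nu + 1) * (2 / mu) * B * real N powr (xi * (2 - s))"
      by (rule main_bound[where lam=lam and b=b])
         (use pos elim muN nuN mu s2 xi hb small h_range Ch in \<open>auto\<close>)
    moreover have "xi * (2 - s) = - theta" unfolding theta_def by (simp add: algebra_simps)
    ultimately show ?case unfolding K_def by simp
  qed
  then have "(\<lambda>N. measure_pmf.prob (coupled_graphs h lam N)
                          (- event_A N (real N powr xi) h lam)) \<in> O(\<lambda>N. real N powr (-theta))"
    by (rule bigoI)
  then show ?thesis using theta by blast
qed
end
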